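(* Let $\epsilon_1, \epsilon_2, c \in (0, 1)$. Suppose that a maximization problem admits a polynomial-time $c$-approximation algorithm and a $(1 - \epsilon_1, \epsilon_2)$-APPA $(\mathcal{A}, \mathcal{B})$. Then it admits a $(1 - \epsilon_1 - \epsilon_2 / c)$-APPA whose reduction algorithm is $\mathcal{A}$.
   Context: For a parameterized maximization problem with instances $(I,k)$ and optimum value $\mathrm{OPT}(I,k)$, a solution is $\beta$-approximate if its value is at least $\beta \cdot \mathrm{OPT}(I,k)$. An $\alpha$-APPA (approximate polynomial-time pre-processing algorithm) is a pair of polynomial-time algorithms $(\mathcal{A}, \mathcal{B})$ (reduction and solution-lifting algorithm): given an instance $(I, k)$, $\mathcal{A}$ outputs an instance $(I', k')$ of the same problem, and given any $\beta$-approximate solution of $(I', k')$, $\mathcal{B}$ outputs an $\alpha\beta$-approximate solution of $(I, k)$. An $(\alpha, \gamma)$-APPA is defined identically except that $\mathcal{B}$ is only required to output an $(\alpha\beta - \gamma)$-approximate solution of $(I,k)$, i.e. one of value at least $(\alpha\beta-\gamma)\mathrm{OPT}(I,k)$. A $c$-approximation algorithm outputs a $c$-approximate solution. *)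

theory Defs
  imports Main "HOL.Real"
begin

text \<open>A (parameterized) maximization problem over instances of type 'x
(an instance is a pair (I,k), kept abstract) and solutions of type 's:
F x is the set of feasible solutions of instance x and v x s the value of s.\<close>

definition max_problem :: "('x \<Rightarrow> 's set) \<Rightarrow> ('x \<Rightarrow> 's \<Rightarrow> real) \<Rightarrow> bool" where
  "max_problem F v \<longleftrightarrow>
     (\<forall>x. \<forall>s\<in>F x. 0 \<le> v x s) \<and> (\<forall>x. \<exists>s\<in>F x. \<forall>t\<in>F x. v x t \<le> v x s)"

definition OPT :: "('x \<Rightarrow> 's set) \<Rightarrow> ('x \<Rightarrow> 's \<Rightarrow> real) \<Rightarrow> 'x \<Rightarrow> real" where
  "OPT F v x = (SUP s\<in>F x. v x s)"

definition approx_sol :: "('x \<Rightarrow> 's set) \<Rightarrow> ('x \<Rightarrow> 's \<Rightarrow> real) \<Rightarrow> real \<Rightarrow> 'x \<Rightarrow> 's \<Rightarrow> bool" where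
  "approx_sol F v \<beta> x s \<longleftrightarrow> s \<in> F x \<and> \<beta> * OPT F v x \<le> v x s"

text \<open>Polynomial-time computability is modelled abstractly by predicates
ptr (reduction algorithms), ptl (solution-lifting algorithms, which receive the
original instance and a solution of the reduced instance) and pta (algorithms
mapping instances to solutions).\<close>

definition APPA2 ::
  "('x \<Rightarrow> 's set) \<Rightarrow> ('x \<Rightarrow> 's \<Rightarrow> real) \<Rightarrow> (('x \<Rightarrow> 'x) \<Rightarrow> bool) \<Rightarrow> (('x \<Rightarrow> 's \<Rightarrow> 's) \<Rightarrow> bool)
   \<Rightarrow> real \<Rightarrow> real \<Rightarrow> ('x \<Rightarrow> 'x) \<Rightarrow> ('x \<Rightarrow> 's \<Rightarrow> 's) \<Rightarrow> bool" where
  "APPA2 F v ptr ptl \<alpha> \<gamma> A B \<longleftrightarrow> ptr A \<and> ptl B \<and>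
     (\<forall>x \<beta> s. 0 < \<beta> \<longrightarrow> \<beta> \<le> 1 \<longrightarrow> approx_sol F v \<beta> (A x) s \<longrightarrow> approx_sol F v (\<alpha> * \<beta> - \<gamma>) x (B x s))"

definition APPA ::
  "('x \<Rightarrow> 's set) \<Rightarrow> ('x \<Rightarrow> 's \<Rightarrow> real) \<Rightarrow> (('x \<Rightarrow> 'x) \<Rightarrow> bool) \<Rightarrow> (('x \<Rightarrow> 's \<Rightarrow> 's) \<Rightarrow> bool)
   \<Rightarrow> real \<Rightarrow> ('x \<Rightarrow> 'x) \<Rightarrow> ('x \<Rightarrow> 's \<Rightarrow> 's) \<Rightarrow> bool" where
  "APPA F v ptr ptl \<alpha> A B \<longleftrightarrow> ptr A \<and> ptl B \<and>
     (\<forall>x \<beta> s. 0 < \<beta> \<longrightarrow> \<beta> \<le> 1 \<longrightarrow> approx_sol F v \<beta> (A x) s \<longrightarrow> approx_sol F v (\<alpha> * \<beta>) x (B x s))"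

definition approx_alg ::
  "('x \<Rightarrow> 's set) \<Rightarrow> ('x \<Rightarrow> 's \<Rightarrow> real) \<Rightarrow> (('x \<Rightarrow> 's) \<Rightarrow> bool) \<Rightarrow> real \<Rightarrow> ('x \<Rightarrow> 's) \<Rightarrow> bool" where
  "approx_alg F v pta c C \<longleftrightarrow> pta C \<and> (\<forall>x. approx_sol F v c x (C x))"

text \<open>Closure properties of polynomial time used for solution lifting:
an instance-to-solution algorithm may be used as a lifting algorithm (ignoring
the given solution), and running two lifting algorithms and returning the output
of larger value (the value function being polynomial-time computable) is again
polynomial time.\<close>
definition ptime_closed ::
  "('x \<Rightarrow> 's \<Rightarrow> real) \<Rightarrow> (('x \<Rightarrow> 's \<Rightarrow> 's) \<Rightarrow> bool) \<Rightarrow> (('x \<Rightarrow> 's) \<Rightarrow> bool) \<Rightarrow> bool" where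
  "ptime_closed v ptl pta \<longleftrightarrow>
     (\<forall>C. pta C \<longrightarrow> ptl (\<lambda>x s. C x)) \<and>
     (\<forall>f g. ptl f \<longrightarrow> ptl g \<longrightarrow>
        ptl (\<lambda>x s. if v x (g x s) \<le> v x (f x s) then f x s else g x s))"

end

theory Submission
  imports Defs
begin

lemma OPT_nonneg:
  assumes "max_problem F v"
  shows "0 \<le> OPT F v x"
proof -
  from assms obtain s where s: "s \<in> F x" "\<forall>t\<in>F x. v x t \<le> v x s" "0 \<le> v x s"
    unfolding max_problem_def by blast
  have "bdd_above (v x ` F x)" using s by (auto intro!: bdd_aboveI2)
  hence "v x s \<le> OPT F v x" unfolding OPT_def using s(1) by (rule cSUP_upper2) simp
  thus ?thesis using s(3) by linarith
qed

theorem lemma2p1: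
  fixes F :: "'x \<Rightarrow> 's set" and v :: "'x \<Rightarrow> 's \<Rightarrow> real"
    and ptr :: "('x \<Rightarrow> 'x) \<Rightarrow> bool" and ptl :: "('x \<Rightarrow> 's \<Rightarrow> 's) \<Rightarrow> bool"
    and pta :: "('x \<Rightarrow> 's) \<Rightarrow> bool"
    and \<epsilon>1 \<epsilon>2 c :: real and A :: "'x \<Rightarrow> 'x" and B :: "'x \<Rightarrow> 's \<Rightarrow> 's" and C :: "'x \<Rightarrow> 's"
  assumes "max_problem F v"
    and "ptime_closed v ptl pta"
    and "0 < \<epsilon>1" "\<epsilon>1 < 1" "0 < \<epsilon>2" "\<epsilon>2 < 1" "0 < c" "c < 1"
    and "approx_alg F v pta c C"
    and "APPA2 F v ptr ptl (1 - \<epsilon>1) \<epsilon>2 A B"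
  shows "\<exists>B'. APPA F v ptr ptl (1 - \<epsilon>1 - \<epsilon>2 / c) A B'"
proof
  let ?B' = "\<lambda>x s. if v x ((\<lambda>x s. C x) x s) \<le> v x (B x s) then B x s else (\<lambda>x s. C x) x s"
  have pC: "pta C" and aC: "\<And>x. approx_sol F v c x (C x)"
    using assms(9) unfolding approx_alg_def by auto
  have pA: "ptr A" and pB: "ptl B" and aB: "\<And>x \<beta> s. 0 < \<beta> \<Longrightarrow> \<beta> \<le> 1 \<Longrightarrow> approx_sol F v \<beta> (A x) s
      \<Longrightarrow> approx_sol F v ((1 - \<epsilon>1) * \<beta> - \<epsilon>2) x (B x s)"
    using assms(10) unfolding APPA2_def by auto
  have pB': "ptl ?B'" using assms(2) pB pC unfolding ptime_closed_def by blast
  show "APPA F v ptr ptl (1 - \<epsilon>1 - \<epsilon>2 / c) A ?B'"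
    unfolding APPA_def
  proof (intro conjI pA pB' allI impI)
    fix x \<beta> s assume b0: "0 < \<beta>" and b1: "\<beta> \<le> 1" and sa: "approx_sol F v \<beta> (A x) s"
    have hB: "B x s \<in> F x" "((1 - \<epsilon>1) * \<beta> - \<epsilon>2) * OPT F v x \<le> v x (B x s)"
      using aB[OF b0 b1 sa] unfolding approx_sol_def by auto
    have hC: "C x \<in> F x" "c * OPT F v x \<le> v x (C x)"
      using aC[of x] unfolding approx_sol_def by auto
    have O: "0 \<le> OPT F v x" using OPT_nonneg[OF assms(1)] .
    have key: "(1 - \<epsilon>1 - \<epsilon>2 / c) * \<beta> * OPT F v x \<le> max (v x (B x s)) (v x (C x))"
    proof (cases "c \<le> \<beta>")
      case True
      have "\<epsilon>2 \<le> \<epsilon>2 / c * \<beta>" using True assms(5,7)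
        by (simp add: field_simps)
      hence "(1 - \<epsilon>1 - \<epsilon>2 / c) * \<beta> \<le> (1 - \<epsilon>1) * \<beta> - \<epsilon>2" by (simp add: algebra_simps)
      hence "(1 - \<epsilon>1 - \<epsilon>2 / c) * \<beta> * OPT F v x \<le> ((1 - \<epsilon>1) * \<beta> - \<epsilon>2) * OPT F v x"
        using O by (rule mult_right_mono)
      thus ?thesis using hB by linarith
    next
      case False
      have "0 \<le> \<epsilon>2 / c * \<beta>" using assms(5,7) b0 by simp
      hence "(1 - \<epsilon>1 - \<epsilon>2 / c) * \<beta> \<le> c" using False assms(3) b0
        by (simp add: algebra_simps) (smt (verit) mult_pos_pos)
      hence "(1 - \<epsilon>1 - \<epsilon>2 / c) * \<beta> * OPT F v x \<le> c * OPT F v x"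
        using O by (rule mult_right_mono)
      thus ?thesis using hC by linarith
    qed
    show "approx_sol F v ((1 - \<epsilon>1 - \<epsilon>2 / c) * \<beta>) x (?B' x s)"
      unfolding approx_sol_def using hB hC key by (auto simp: max_def)
  qed
qed

end
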